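(* Let $d\ge1$, $\alpha\in\mathbb{N}$, let $H=(V,E)$ be a $d$-hypergraph with no isolated vertex and let $w\colon E\to\mathbb{Z}$ satisfy $w(e)\ne0$ for all $e\in E$. Define $g(0)=1$ and $g(i)=\big(i^{i}\cdot 2\alpha\cdot 2^{2^d}\big)^{2^i-1}$ for $i>0$. Suppose there is a set $c$ with $c\subseteq e$ for some $e\in E$ such that (i) $|\mathrm{link}(c)|\ge g(d-|c|)$, and (ii) for every set $f$ with $c\subsetneq f\subseteq V$ and $|f|\le d$ we have $|\mathrm{link}(f)|<g(d-|f|)$. Then there is a set $X\subseteq V$ with $|w[X]|\ge\alpha$.
   Context: A $d$-hypergraph $H=(V,E)$ has a vertex set $V$ and a set $E$ of edges, each $e\subseteq V$ with $|e|\le d$ (the empty set may be an edge). A vertex is isolated if it lies in no edge. For $c\subseteq V$, $\mathrm{link}(c)=\{e\in E: c\subsetneq e\}$. For $X\subseteq V$, $E[X]=\{e\in E: e\subseteq X\}$ and $w[X]=\sum_{e\in E[X]}w(e)$. *)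

theory Defs
  imports Main
begin

definition hypergraph :: "nat \<Rightarrow> 'a set \<Rightarrow> 'a set set \<Rightarrow> bool" where
  "hypergraph d V E \<longleftrightarrow> finite V \<and> (\<forall>e\<in>E. e \<subseteq> V \<and> card e \<le> d)"

definition no_isolated :: "'a set \<Rightarrow> 'a set set \<Rightarrow> bool" where
  "no_isolated V E \<longleftrightarrow> (\<forall>v\<in>V. \<exists>e\<in>E. v \<in> e)"

definition link :: "'a set set \<Rightarrow> 'a set \<Rightarrow> 'a set set" where
  "link E c = {e \<in> E. c \<subset> e}"

definition induced_edges :: "'a set set \<Rightarrow> 'a set \<Rightarrow> 'a set set" where
  "induced_edges E X = {e \<in> E. e \<subseteq> X}"

definition weight :: "'a set set \<Rightarrow> ('a set \<Rightarrow> int) \<Rightarrow> 'a set \<Rightarrow> int" where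
  "weight E w X = (\<Sum>e\<in>induced_edges E X. w e)"

definition gfun :: "nat \<Rightarrow> nat \<Rightarrow> nat \<Rightarrow> nat" where
  "gfun d \<alpha> i = (if i = 0 then 1 else (i ^ i * (2 * \<alpha>) * 2 ^ (2 ^ d)) ^ (2 ^ i - 1))"

end

theory Submission
  imports Defs Complex_Main "HOL-Library.FuncSet"
begin



definition altS :: "nat \<Rightarrow> (nat \<Rightarrow> real) \<Rightarrow> real" where
  "altS d q = (\<Sum>j\<le>d. (-1)^j * real (d choose j) * q j)"

lemma S_Suc: "altS (Suc d) q = altS d q - altS d (\<lambda>j. q (Suc j))"
proof -
  have "altS (Suc d) q = (\<Sum>j\<le>Suc d. (-1)^j * real (d choose j) * q j)
        + (\<Sum>j\<le>Suc d. (-1)^j * real (if j = 0 then 0 else d choose (j - 1)) * q j)"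
    unfolding altS_def by (subst sum.distrib[symmetric], rule sum.cong, auto simp: algebra_simps choose_reduce_nat)
  also have "(\<Sum>j\<le>Suc d. (-1)^j * real (d choose j) * q j) = altS d q"
    unfolding altS_def by (simp add: sum.atMost_Suc)
  also have "(\<Sum>j\<le>Suc d. (-1)^j * real (if j = 0 then 0 else d choose (j - 1)) * q j)
       = (\<Sum>j\<le>d. (-1)^(Suc j) * real (d choose j) * q (Suc j))"
    by (subst sum.atMost_Suc_shift) simp
  also have "\<dots> = - altS d (\<lambda>j. q (Suc j))" unfolding altS_def by (simp add: sum_negf[symmetric])
  finally show ?thesis by simp
qed

lemma S_lin: "altS d (\<lambda>j. a * f j + b * g j) = a * altS d f + b * altS d g"
  unfolding altS_def by (simp add: sum.distrib sum_distrib_left algebra_simps)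

lemma S_sum: "finite R \<Longrightarrow> altS d (\<lambda>j. \<Sum>r\<in>R. h r j) = (\<Sum>r\<in>R. altS d (h r))"
  unfolding altS_def by (simp add: sum_distrib_left sum.swap[of _ R] algebra_simps)

lemma S_pow: "s < d \<Longrightarrow> altS d (\<lambda>j. real j ^ s) = 0"
proof (induction d arbitrary: s)
  case 0 then show ?case by simp
next
  case (Suc d)
  have "(\<lambda>j. real (Suc j) ^ s) = (\<lambda>j. \<Sum>r\<le>s. real (s choose r) * real j ^ r)"
    by (rule ext, subst of_nat_Suc, subst add.commute, subst binomial_ring[of "real _" 1 s], simp add: mult.commute)
  also have "\<dots> = (\<lambda>j. real j ^ s + (\<Sum>r<s. real (s choose r) * real j ^ r))"
    by (simp add: lessThan_Suc_atMost[symmetric] add.commute)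
  finally have e: "(\<lambda>j. real (Suc j) ^ s) = \<dots>" .
  have "altS d (\<lambda>j. real (Suc j) ^ s) = altS d (\<lambda>j. real j ^ s) + (\<Sum>r<s. altS d (\<lambda>j. real (s choose r) * real j ^ r))"
    unfolding e using S_lin[of d 1 "\<lambda>j. real j ^ s" 1 "\<lambda>j. (\<Sum>r<s. real (s choose r) * real j ^ r)"]
    by (simp add: S_sum)
  also have "(\<Sum>r<s. altS d (\<lambda>j. real (s choose r) * real j ^ r)) = 0"
  proof (rule sum.neutral, safe)
    fix r assume "r < s"
    hence "altS d (\<lambda>j. real j ^ r) = 0" using Suc by simp
    thus "altS d (\<lambda>j. real (s choose r) * real j ^ r) = 0"
      using S_lin[of d "real (s choose r)" "\<lambda>j. real j ^ r" 0 "\<lambda>_. 0"] by simp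
  qed
  finally show ?case using S_Suc[of d "\<lambda>j. real j ^ s"] by simp
qed

definition lam :: "nat \<Rightarrow> nat \<Rightarrow> real" where
  "lam d j = (if j = 0 then - (\<Sum>i\<in>{1..d}. (-1)^(i-1) * real (d choose i) / real i)
              else (-1)^(j-1) * real (d choose j) / real j)"

lemma sum_split0: "(\<Sum>j\<le>(d::nat). f j) = f 0 + (\<Sum>j\<in>{1..d}. f j)"
proof -
  have "{..d} = insert 0 {1..d}" by (auto simp: le_Suc_eq Suc_le_eq)
  thus ?thesis by simp
qed

lemma Lam: assumes "d \<ge> 1" "t \<le> d"
  shows "(\<Sum>j\<le>d. lam d j * real j ^ t) = (if t = 1 then 1 else 0)"
proof (cases "t = 0")
  case True
  then show ?thesis by (subst sum_split0) (simp add: lam_def)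
next
  case False
  then obtain s where t: "t = Suc s" by (cases t) auto
  have "(\<Sum>j\<le>d. lam d j * real j ^ t) = (\<Sum>j\<in>{1..d}. lam d j * real j ^ t)"
    by (subst sum_split0) (simp add: t)
  also have "\<dots> = (\<Sum>j\<in>{1..d}. - ((-1)^j * real (d choose j) * real j ^ s))"
  proof (rule sum.cong)
    fix j assume "j \<in> {1..d}"
    then obtain i where j: "j = Suc i" by (cases j) auto
    show "lam d j * real j ^ t = - ((-1)^j * real (d choose j) * real j ^ s)"
      by (simp add: lam_def t j field_simps)
  qed simp
  also have "\<dots> = - (altS d (\<lambda>j. real j ^ s) - (if s = 0 then 1 else 0))"
    unfolding altS_def sum_split0[of _ d] by (simp add: sum_negf)
  also have "altS d (\<lambda>j. real j ^ s) = 0" using assms t by (intro S_pow) simp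
  finally show ?thesis using t by simp
qed



lemma lam_abs_le: "j \<in> {1..d} \<Longrightarrow> \<bar>lam d j\<bar> \<le> real (d choose j)"
proof -
  assume j: "j \<in> {1..d}"
  hence "\<bar>lam d j\<bar> = real (d choose j) / real j" by (simp add: lam_def abs_mult)
  also have "\<dots> \<le> real (d choose j)" using j by (simp add: divide_le_eq)
  finally show ?thesis .
qed

lemma sum_choose_1: "(\<Sum>j\<in>{1..d}. real (d choose j)) = 2 ^ d - 1"
proof -
  have "(\<Sum>j\<le>d. real (d choose j)) = 2 ^ d"
    using choose_row_sum[of d] by (metis of_nat_numeral of_nat_power of_nat_sum)
  thus ?thesis by (subst (asm) sum_split0) simp
qed

lemma sum_lam_le: "(\<Sum>j\<le>d. \<bar>lam d j\<bar>) \<le> 2 * (2 ^ d - 1)"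
proof -
  have a: "(\<Sum>j\<in>{1..d}. \<bar>lam d j\<bar>) \<le> 2 ^ d - 1"
    using sum_mono[of "{1..d}" "\<lambda>j. \<bar>lam d j\<bar>" "\<lambda>j. real (d choose j)"] lam_abs_le sum_choose_1 by simp
  have "\<bar>lam d 0\<bar> = \<bar>\<Sum>i\<in>{1..d}. lam d i\<bar>"
    by (simp add: lam_def)
  also have "\<dots> \<le> (\<Sum>j\<in>{1..d}. \<bar>lam d j\<bar>)" by (rule sum_abs)
  finally have "\<bar>lam d 0\<bar> \<le> 2 ^ d - 1" using a by simp
  thus ?thesis using a by (subst sum_split0) simp
qed

lemma pow_aux: "d \<ge> 4 \<Longrightarrow> 3 * d \<le> (2::nat) ^ d"
proof (induction d rule: dec_induct)
  case base then show ?case by simp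
next
  case (step n) then show ?case by simp
qed

lemma Kbound: assumes "d \<ge> 1"
  shows "real d * (\<Sum>j\<le>d. \<bar>lam d j\<bar>) * 2 ^ d \<le> 2 * 2 ^ (2 ^ d)"
proof -
  consider "d = 1" | "d = 2" | "d = 3" | "d \<ge> 4" using assms by linarith
  then show ?thesis
  proof cases
    case 1 then show ?thesis using sum_lam_le[of 1] by simp
  next
    case 2
    have "(\<Sum>j\<le>2. \<bar>lam 2 j\<bar>) = 4"
      by (simp add: lam_def numeral_2_eq_2 atMost_Suc)
    then show ?thesis using 2 by simp
  next
    case 3 then show ?thesis using sum_lam_le[of 3] by simp
  next
    case 4
    have "real d * (\<Sum>j\<le>d. \<bar>lam d j\<bar>) * 2 ^ d \<le> real d * (2 * 2 ^ d) * 2 ^ d"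
      using sum_lam_le[of d] by (intro mult_right_mono mult_left_mono) auto
    also have "\<dots> \<le> 2 ^ d * (2 * 2 ^ d) * 2 ^ d"
      by (intro mult_right_mono) (auto simp: less_imp_le[OF of_nat_less_two_power])
    also have "\<dots> = 2 * (2::real) ^ (3 * d)"
    proof -
      have "(2::real) ^ (3 * d) = 2 ^ d * 2 ^ d * 2 ^ d" by (simp add: numeral_3_eq_3 power_add)
      thus ?thesis by simp
    qed
    also have "\<dots> \<le> 2 * 2 ^ (2 ^ d)" using pow_aux[OF 4] by (simp add: power_increasing)
    finally show ?thesis .
  qed
qed



lemma weight_alt: "finite E \<Longrightarrow> weight E w X = (\<Sum>e\<in>E. if e \<subseteq> X then w e else 0)"
  unfolding weight_def induced_edges_def by (simp add: sum.inter_filter)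

lemma card_PiE_restr:
  assumes "finite I" "T \<subseteq> I" "j \<le> d"
  shows "card {\<phi> \<in> PiE I (\<lambda>_. {..<d}). \<forall>i\<in>T. \<phi> i < j} = j ^ card T * d ^ (card I - card T)"
proof -
  have "{\<phi> \<in> PiE I (\<lambda>_. {..<d}). \<forall>i\<in>T. \<phi> i < j} = PiE I (\<lambda>i. if i \<in> T then {..<j} else {..<d})"
  proof (intro set_eqI iffI)
    fix \<phi> assume "\<phi> \<in> {\<phi> \<in> PiE I (\<lambda>_. {..<d}). \<forall>i\<in>T. \<phi> i < j}"
    thus "\<phi> \<in> PiE I (\<lambda>i. if i \<in> T then {..<j} else {..<d})" by (auto simp: PiE_iff)
  next
    fix \<phi> assume "\<phi> \<in> PiE I (\<lambda>i. if i \<in> T then {..<j} else {..<d})"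
    thus "\<phi> \<in> {\<phi> \<in> PiE I (\<lambda>_. {..<d}). \<forall>i\<in>T. \<phi> i < j}"
      using assms by (auto simp: PiE_iff split: if_splits)
  qed
  hence "card {\<phi> \<in> PiE I (\<lambda>_. {..<d}). \<forall>i\<in>T. \<phi> i < j} = (\<Prod>i\<in>I. if i \<in> T then j else d)"
    using assms by (simp add: card_PiE if_distrib cong: if_cong)
  also have "\<dots> = j ^ card T * d ^ (card I - card T)"
  proof -
    have "card (I \<inter> - T) = card I - card T"
      using assms by (metis Diff_eq card_Diff_subset finite_subset)
    thus ?thesis using assms by (simp add: prod.If_cases Int_absorb1)
  qed
  finally show ?thesis .
qed

lemma card_T_le:
  assumes "finite e" "\<forall>i\<in>I. \<forall>j\<in>I. i \<noteq> j \<longrightarrow> B i \<inter> B j = {}"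
  shows "card {i\<in>I. e \<inter> B i \<noteq> {}} \<le> card e"
proof -
  let ?T = "{i\<in>I. e \<inter> B i \<noteq> {}}"
  define h where "h i = (SOME x. x \<in> e \<inter> B i)" for i
  have h: "h i \<in> e \<inter> B i" if "i \<in> ?T" for i
  proof -
    from that obtain x where "x \<in> e \<inter> B i" by blast
    thus ?thesis unfolding h_def by (rule someI)
  qed
  have "inj_on h ?T"
  proof (rule inj_onI)
    fix i j assume ij: "i \<in> ?T" "j \<in> ?T" "h i = h j"
    show "i = j"
    proof (rule ccontr)
      assume "i \<noteq> j"
      hence "B i \<inter> B j = {}" using assms(2) ij by simp
      moreover have "h i \<in> B i" using h[OF ij(1)] by blast
      moreover have "h j \<in> B j" using h[OF ij(2)] by blast
      ultimately show False using ij(3) by auto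
    qed
  qed
  moreover have "h ` ?T \<subseteq> e" using h by blast
  ultimately show ?thesis using assms(1) by (rule card_inj_on_le)
qed

lemma avg:
  fixes E :: "'a set set" and I :: "'b set" and B :: "'b \<Rightarrow> 'a set" and \<beta> :: int
  assumes finE: "finite E" and finI: "finite I" and edges: "\<forall>e\<in>E. finite e \<and> card e \<le> d" and d: "d \<ge> 1"
    and AB: "\<forall>i\<in>I. A \<inter> B i = {}" and disj: "\<forall>i\<in>I. \<forall>j\<in>I. i \<noteq> j \<longrightarrow> B i \<inter> B j = {}"
    and bnd: "\<forall>J\<subseteq>I. \<bar>weight E w (A \<union> \<Union>(B ` J))\<bar> \<le> \<beta>"
  shows "real_of_int \<bar>\<Sum>i\<in>I. (weight E w (A \<union> B i) - weight E w A)\<bar> \<le> real d * (\<Sum>j\<le>d. \<bar>lam d j\<bar>) * real_of_int \<beta>"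
proof -
  define \<Phi> where "\<Phi> = PiE I (\<lambda>_. {..<d})"
  define X where "X \<phi> j = A \<union> \<Union>(B ` {i\<in>I. \<phi> i < j})" for \<phi> :: "'b \<Rightarrow> nat" and j
  define T where "T e = {i\<in>I. e \<inter> B i \<noteq> {}}" for e
  define U where "U = A \<union> \<Union>(B ` I)"
  define E0 where "E0 = {e\<in>E. e \<subseteq> U}"
  define Z where "Z j = (\<Sum>\<phi>\<in>\<Phi>. real_of_int (weight E w (X \<phi> j)))" for j
  define m where "m = card I"
  define R where "R = (\<Sum>i\<in>I. (weight E w (A \<union> B i) - weight E w A))"
  have finPhi: "finite \<Phi>" unfolding \<Phi>_def using finI by (simp add: finite_PiE)
  have cardPhi: "card \<Phi> = d ^ m" unfolding \<Phi>_def m_def using finI by (simp add: card_PiE)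
  have TI: "T e \<subseteq> I" for e unfolding T_def by auto
  have memX: "(e \<subseteq> X \<phi> j) \<longleftrightarrow> (e \<subseteq> U \<and> (\<forall>i\<in>T e. \<phi> i < j))" for e \<phi> j
  proof
    assume H: "e \<subseteq> X \<phi> j"
    have "e \<subseteq> U" using H unfolding X_def U_def by auto
    moreover have "\<phi> i < j" if "i \<in> T e" for i
    proof -
      from that obtain x where x: "x \<in> e" "x \<in> B i" "i \<in> I" unfolding T_def by auto
      have "x \<notin> A" using AB x by auto
      then obtain i' where i': "i' \<in> I" "\<phi> i' < j" "x \<in> B i'" using H x unfolding X_def by auto
      have "i' = i" using disj i' x by auto
      thus ?thesis using i' by simp
    qed
    ultimately show "e \<subseteq> U \<and> (\<forall>i\<in>T e. \<phi> i < j)" by auto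
  next
    assume H: "e \<subseteq> U \<and> (\<forall>i\<in>T e. \<phi> i < j)"
    show "e \<subseteq> X \<phi> j"
    proof
      fix x assume x: "x \<in> e"
      show "x \<in> X \<phi> j"
      proof (cases "x \<in> A")
        case True thus ?thesis unfolding X_def by auto
      next
        case False
        then obtain i where i: "i \<in> I" "x \<in> B i" using H x unfolding U_def by auto
        hence "i \<in> T e" unfolding T_def using x by auto
        hence "\<phi> i < j" using H by auto
        thus ?thesis unfolding X_def using i by auto
      qed
    qed
  qed
  have cnt: "card {\<phi>\<in>\<Phi>. e \<subseteq> X \<phi> j} = (if e \<in> E0 then j ^ card (T e) * d ^ (m - card (T e)) else 0)"
    if "e \<in> E" "j \<le> d" for e j
  proof (cases "e \<in> E0")
    case True
    hence "{\<phi>\<in>\<Phi>. e \<subseteq> X \<phi> j} = {\<phi> \<in> PiE I (\<lambda>_. {..<d}). \<forall>i\<in>T e. \<phi> i < j}"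
      unfolding \<Phi>_def E0_def using memX by auto
    thus ?thesis using True card_PiE_restr[OF finI TI[of e] that(2)] unfolding m_def by simp
  next
    case False
    hence ce: "{\<phi>\<in>\<Phi>. e \<subseteq> X \<phi> j} = {}" using memX that(1) unfolding E0_def by auto
    show ?thesis by (subst ce) (simp add: False)
  qed
  have Zeq: "Z j = (\<Sum>e\<in>E0. real_of_int (w e) * (real j ^ card (T e) * real d ^ (m - card (T e))))"
    if "j \<le> d" for j
  proof -
    have "Z j = (\<Sum>\<phi>\<in>\<Phi>. \<Sum>e\<in>E. if e \<subseteq> X \<phi> j then real_of_int (w e) else 0)"
      unfolding Z_def by (rule sum.cong[OF refl], simp add: weight_alt[OF finE] of_int_sum, rule sum.cong[OF refl], simp)
    also have "\<dots> = (\<Sum>e\<in>E. \<Sum>\<phi>\<in>\<Phi>. if e \<subseteq> X \<phi> j then real_of_int (w e) else 0)"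
      by (rule sum.swap)
    also have "\<dots> = (\<Sum>e\<in>E. real_of_int (w e) * real (card {\<phi>\<in>\<Phi>. e \<subseteq> X \<phi> j}))"
      by (rule sum.cong[OF refl]) (simp add: sum.If_cases finPhi Int_def conj_commute)
    also have "\<dots> = (\<Sum>e\<in>E. if e \<in> E0 then real_of_int (w e) * (real j ^ card (T e) * real d ^ (m - card (T e))) else 0)"
      by (rule sum.cong[OF refl]) (simp add: cnt that)
    also have "\<dots> = (\<Sum>e\<in>E0. real_of_int (w e) * (real j ^ card (T e) * real d ^ (m - card (T e))))"
      using finE by (simp add: sum.If_cases E0_def Int_def)
    finally show ?thesis .
  qed
  have Tle: "card (T e) \<le> d" if "e \<in> E" for e
    using card_T_le[of e I B] edges disj that unfolding T_def by fastforce
  have finE0: "finite E0" using finE unfolding E0_def by simp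
  have key: "(\<Sum>j\<le>d. lam d j * Z j) = real d ^ (m - 1) * (\<Sum>e\<in>E0. if card (T e) = 1 then real_of_int (w e) else 0)"
  proof -
    have "(\<Sum>j\<le>d. lam d j * Z j) = (\<Sum>j\<le>d. \<Sum>e\<in>E0. real_of_int (w e) * real d ^ (m - card (T e)) * (lam d j * real j ^ card (T e)))"
      by (rule sum.cong[OF refl]) (simp add: Zeq sum_distrib_left algebra_simps)
    also have "\<dots> = (\<Sum>e\<in>E0. real_of_int (w e) * real d ^ (m - card (T e)) * (\<Sum>j\<le>d. lam d j * real j ^ card (T e)))"
      by (subst sum.swap) (simp add: sum_distrib_left)
    also have "\<dots> = (\<Sum>e\<in>E0. real_of_int (w e) * real d ^ (m - card (T e)) * (if card (T e) = 1 then 1 else 0))"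
      by (rule sum.cong[OF refl]) (use Lam[OF d] Tle E0_def in auto)
    also have "\<dots> = real d ^ (m - 1) * (\<Sum>e\<in>E0. if card (T e) = 1 then real_of_int (w e) else 0)"
      by (simp add: sum_distrib_left if_distrib mult.commute cong: if_cong)
    finally show ?thesis .
  qed
  have Rchar: "(\<Sum>e\<in>E0. if card (T e) = 1 then real_of_int (w e) else 0) = real_of_int R"
  proof -
    have Pchar: "(e \<subseteq> A \<union> B i \<and> \<not> e \<subseteq> A) \<longleftrightarrow> (e \<in> E0 \<and> T e = {i})" if "i \<in> I" "e \<in> E" for i e
    proof
      assume H: "e \<subseteq> A \<union> B i \<and> \<not> e \<subseteq> A"
      have "e \<in> E0" using H that unfolding E0_def U_def by auto
      moreover have "T e = {i}"
      proof
        show "T e \<subseteq> {i}"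
        proof
          fix i' assume "i' \<in> T e"
          then obtain y where y: "y \<in> e" "y \<in> B i'" "i' \<in> I" unfolding T_def by auto
          have "y \<notin> A" using AB y by auto
          hence "y \<in> B i" using H y by auto
          hence "i' = i" using disj y that by auto
          thus "i' \<in> {i}" by simp
        qed
        from H obtain x where "x \<in> e" "x \<notin> A" by auto
        hence "x \<in> B i" using H by auto
        thus "{i} \<subseteq> T e" using \<open>x \<in> e\<close> that unfolding T_def by auto
      qed
      ultimately show "e \<in> E0 \<and> T e = {i}" by simp
    next
      assume H: "e \<in> E0 \<and> T e = {i}"
      have "e \<subseteq> A \<union> B i"
      proof
        fix x assume x: "x \<in> e"
        show "x \<in> A \<union> B i"
        proof (cases "x \<in> A")
          case False
          then obtain i' where "i' \<in> I" "x \<in> B i'" using H x unfolding E0_def U_def by auto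
          hence "i' \<in> T e" using x unfolding T_def by auto
          thus ?thesis using H \<open>x \<in> B i'\<close> by auto
        qed simp
      qed
      moreover have "i \<in> T e" using H by simp
      then obtain x where "x \<in> e" "x \<in> B i" unfolding T_def by auto
      hence "\<not> e \<subseteq> A" using AB that by auto
      ultimately show "e \<subseteq> A \<union> B i \<and> \<not> e \<subseteq> A" by simp
    qed
    have "R = (\<Sum>i\<in>I. \<Sum>e\<in>E. if e \<subseteq> A \<union> B i \<and> \<not> e \<subseteq> A then w e else 0)"
      unfolding R_def weight_alt[OF finE]
      by (rule sum.cong[OF refl]) (auto simp: sum_subtractf[symmetric] intro!: sum.cong)
    also have "\<dots> = (\<Sum>e\<in>E. \<Sum>i\<in>I. if e \<subseteq> A \<union> B i \<and> \<not> e \<subseteq> A then w e else 0)"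
      by (rule sum.swap)
    also have "\<dots> = (\<Sum>e\<in>E. if e \<in> E0 \<and> card (T e) = 1 then w e else 0)"
    proof (rule sum.cong[OF refl])
      fix e assume e: "e \<in> E"
      have "(\<Sum>i\<in>I. if e \<subseteq> A \<union> B i \<and> \<not> e \<subseteq> A then w e else 0) = (\<Sum>i\<in>I. if e \<in> E0 \<and> T e = {i} then w e else 0)"
        by (rule sum.cong[OF refl]) (simp add: Pchar e)
      also have "\<dots> = (if e \<in> E0 \<and> card (T e) = 1 then w e else 0)"
      proof (cases "e \<in> E0 \<and> card (T e) = 1")
        case True
        then obtain i0 where i0: "T e = {i0}" by (auto simp: card_1_singleton_iff)
        hence "i0 \<in> I" using TI[of e] by auto
        have "(\<Sum>i\<in>I. if e \<in> E0 \<and> T e = {i} then w e else 0) = (\<Sum>i\<in>I. if i = i0 then w e else 0)"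
          by (rule sum.cong[OF refl]) (use True i0 in auto)
        also have "\<dots> = w e" using \<open>i0 \<in> I\<close> finI by simp
        finally show ?thesis using True by simp
      next
        case False
        hence "(\<Sum>i\<in>I. if e \<in> E0 \<and> T e = {i} then w e else 0) = 0"
          by (intro sum.neutral) auto
        moreover have "(if e \<in> E0 \<and> card (T e) = 1 then w e else 0) = 0" using False by (rule if_not_P)
        ultimately show ?thesis by simp
      qed
      finally show "(\<Sum>i\<in>I. if e \<subseteq> A \<union> B i \<and> \<not> e \<subseteq> A then w e else 0) = (if e \<in> E0 \<and> card (T e) = 1 then w e else 0)" .
    qed
    also have "\<dots> = (\<Sum>e\<in>E0. if card (T e) = 1 then w e else 0)"
      by (rule sum.mono_neutral_cong_right[OF finE]) (auto simp: E0_def)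
    finally show ?thesis by (simp add: of_int_sum if_distrib cong: if_cong)
  qed
  have Zb: "\<bar>Z j\<bar> \<le> real d ^ m * real_of_int \<beta>" for j
  proof -
    have "\<bar>Z j\<bar> \<le> (\<Sum>\<phi>\<in>\<Phi>. \<bar>real_of_int (weight E w (X \<phi> j))\<bar>)" unfolding Z_def by (rule sum_abs)
    also have "\<dots> \<le> (\<Sum>\<phi>\<in>\<Phi>. real_of_int \<beta>)"
    proof (rule sum_mono)
      fix \<phi> have "\<bar>weight E w (X \<phi> j)\<bar> \<le> \<beta>" unfolding X_def using bnd by auto
      thus "\<bar>real_of_int (weight E w (X \<phi> j))\<bar> \<le> real_of_int \<beta>" by linarith
    qed
    also have "\<dots> = real d ^ m * real_of_int \<beta>" using cardPhi by simp
    finally show ?thesis .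
  qed
  have "\<bar>\<Sum>j\<le>d. lam d j * Z j\<bar> \<le> (\<Sum>j\<le>d. \<bar>lam d j\<bar> * (real d ^ m * real_of_int \<beta>))"
  proof -
    have "\<bar>\<Sum>j\<le>d. lam d j * Z j\<bar> \<le> (\<Sum>j\<le>d. \<bar>lam d j * Z j\<bar>)" by (rule sum_abs)
    also have "\<dots> \<le> (\<Sum>j\<le>d. \<bar>lam d j\<bar> * (real d ^ m * real_of_int \<beta>))"
      by (rule sum_mono) (simp add: abs_mult mult_left_mono Zb)
    finally show ?thesis .
  qed
  hence main: "real d ^ (m - 1) * \<bar>real_of_int R\<bar> \<le> (\<Sum>j\<le>d. \<bar>lam d j\<bar>) * (real d ^ m * real_of_int \<beta>)"
    using key Rchar by (simp add: abs_mult sum_distrib_right)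
  have b0: "\<beta> \<ge> 0" using bnd[rule_format, of "{}"] by simp
  show ?thesis
  proof (cases "m = 0")
    case True
    hence "I = {}" using finI m_def by simp
    thus ?thesis using b0 by (simp add: sum_nonneg)
  next
    case False
    hence "real d ^ m = real d ^ (m - 1) * real d" by (metis power_minus_mult not_gr0)
    hence "real d ^ (m - 1) * \<bar>real_of_int R\<bar> \<le> real d ^ (m - 1) * (real d * (\<Sum>j\<le>d. \<bar>lam d j\<bar>) * real_of_int \<beta>)"
      using main by (simp add: algebra_simps)
    moreover have "real d ^ (m - 1) > 0" using d by simp
    ultimately have "\<bar>real_of_int R\<bar> \<le> real d * (\<Sum>j\<le>d. \<bar>lam d j\<bar>) * real_of_int \<beta>"
      by (rule mult_left_le_imp_le)
    thus ?thesis unfolding R_def by simp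
  qed
qed



lemma gfun_pos: "\<alpha> \<ge> 1 \<Longrightarrow> gfun d \<alpha> i \<ge> 1"
  unfolding gfun_def by (simp add: Suc_le_eq)

lemma gfun_step:
  assumes "\<alpha> \<ge> 1" "k \<ge> 1"
  shows "k * gfun d \<alpha> (k - 1) * (2 * \<alpha> * 2 ^ (2 ^ d)) \<le> gfun d \<alpha> k"
proof -
  define B where "B = 2 * \<alpha> * 2 ^ (2 ^ d)"
  define Bk where "Bk = k ^ k * B"
  have B1: "B \<ge> 1" using assms unfolding B_def by simp
  have kk: "k \<le> k ^ k" using assms power_increasing[of 1 k k] by simp
  have Bk1: "Bk \<ge> 1" unfolding Bk_def using B1 assms by simp
  have g1: "gfun d \<alpha> (k - 1) \<le> Bk ^ (2 ^ (k - 1) - 1)"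
  proof (cases "k = 1")
    case True thus ?thesis by (simp add: gfun_def)
  next
    case False
    hence "gfun d \<alpha> (k - 1) = ((k-1) ^ (k-1) * B) ^ (2 ^ (k - 1) - 1)"
      using assms unfolding gfun_def B_def by (simp add: mult.assoc)
    also have "\<dots> \<le> Bk ^ (2 ^ (k - 1) - 1)" unfolding Bk_def
    proof (intro power_mono mult_right_mono)
      have "(k-1) ^ (k-1) \<le> k ^ (k-1)" by (simp add: power_mono)
      also have "\<dots> \<le> k ^ k" using assms by (simp add: power_increasing)
      finally show "(k-1) ^ (k-1) \<le> k ^ k" .
    qed auto
    finally show ?thesis .
  qed
  have e: "(2::nat) ^ k - 1 = 2 ^ (k - 1) + (2 ^ (k - 1) - 1)"
  proof -
    have "(2::nat) ^ k = 2 * 2 ^ (k - 1)" using assms by (metis Suc_diff_1 less_le_trans zero_less_one power_Suc)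
    moreover have "(2::nat) ^ (k - 1) \<ge> 1" by simp
    ultimately show ?thesis by linarith
  qed
  have "k * gfun d \<alpha> (k - 1) * B \<le> Bk * Bk ^ (2 ^ (k - 1) - 1)"
  proof -
    have "k * B \<le> Bk" unfolding Bk_def using kk by simp
    hence "k * B * gfun d \<alpha> (k - 1) \<le> Bk * Bk ^ (2 ^ (k - 1) - 1)" using g1 by (intro mult_mono) auto
    thus ?thesis by (simp add: mult_ac)
  qed
  also have "\<dots> \<le> Bk ^ (2 ^ (k - 1)) * Bk ^ (2 ^ (k - 1) - 1)"
    using Bk1 by (intro mult_right_mono) (auto simp: self_le_power)
  also have "\<dots> = Bk ^ (2 ^ k - 1)" by (simp only: e power_add)
  also have "\<dots> = gfun d \<alpha> k"
    using assms unfolding gfun_def Bk_def B_def by (simp add: mult.assoc)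
  finally show ?thesis unfolding B_def .
qed


lemma greedy:
  fixes L :: "'a set set" and p :: "'a set \<Rightarrow> 'a set"
  assumes "finite L" "\<forall>e\<in>L. finite (p e) \<and> card (p e) \<le> k \<and> p e \<noteq> {}"
    "\<forall>v. card {e\<in>L. v \<in> p e} \<le> D"
  shows "\<exists>S\<subseteq>L. (\<forall>e1\<in>S. \<forall>e2\<in>S. e1 \<noteq> e2 \<longrightarrow> p e1 \<inter> p e2 = {}) \<and> card L \<le> card S * (k * D)"
  using assms
proof (induction "card L" arbitrary: L rule: less_induct)
  case less
  note fL = less.prems(1) and pe = less.prems(2) and deg = less.prems(3)
  show ?case
  proof (cases "L = {}")
    case True thus ?thesis by auto
  next
    case False
    then obtain e where e: "e \<in> L" by auto
    define K where "K = {e'\<in>L. p e' \<inter> p e \<noteq> {}}"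
    have KU: "K = (\<Union>v\<in>p e. {e'\<in>L. v \<in> p e'})" unfolding K_def by auto
    have fpe: "finite (p e)" "card (p e) \<le> k" "p e \<noteq> {}" using pe e by auto
    have "card K \<le> (\<Sum>v\<in>p e. card {e'\<in>L. v \<in> p e'})" unfolding KU by (rule card_UN_le) (rule fpe(1))
    also have "\<dots> \<le> (\<Sum>v\<in>p e. D)" using deg by (intro sum_mono) auto
    also have "\<dots> = card (p e) * D" by simp
    also have "\<dots> \<le> k * D" using fpe(2) by simp
    finally have cK: "card K \<le> k * D" .
    have eK: "e \<in> K" using fpe(3) e unfolding K_def by auto
    have KL: "K \<subseteq> L" unfolding K_def by auto
    have fK: "finite K" using KL fL by (rule finite_subset)
    have cL: "card L = card (L - K) + card K" using KL fL fK by (simp add: card_Diff_subset card_mono)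
    have "card K > 0" using eK fK card_gt_0_iff by blast
    hence lt: "card (L - K) < card L" using cL by simp
    have deg': "\<forall>v. card {e\<in>L - K. v \<in> p e} \<le> D"
    proof
      fix v
      have "card {e\<in>L - K. v \<in> p e} \<le> card {e\<in>L. v \<in> p e}" using fL by (intro card_mono) auto
      thus "card {e\<in>L - K. v \<in> p e} \<le> D" using deg[rule_format, of v] by linarith
    qed
    have "finite (L - K)" using fL by simp
    moreover have "\<forall>e\<in>L - K. finite (p e) \<and> card (p e) \<le> k \<and> p e \<noteq> {}" using pe by auto
    ultimately obtain S' where S': "S' \<subseteq> L - K" "\<forall>e1\<in>S'. \<forall>e2\<in>S'. e1 \<noteq> e2 \<longrightarrow> p e1 \<inter> p e2 = {}"
      "card (L - K) \<le> card S' * (k * D)"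
      using less.hyps[OF lt] deg' by blast
    have eS': "e \<notin> S'" using S' eK by auto
    have fS': "finite S'" using S'(1) fL finite_subset by auto
    have disj: "p e' \<inter> p e = {}" if "e' \<in> S'" for e' using S'(1) that unfolding K_def by auto
    show ?thesis
    proof (intro exI[of _ "insert e S'"] conjI)
      show "insert e S' \<subseteq> L" using S' e by auto
      show "\<forall>e1\<in>insert e S'. \<forall>e2\<in>insert e S'. e1 \<noteq> e2 \<longrightarrow> p e1 \<inter> p e2 = {}"
        using S'(2) disj by blast
      have "card (insert e S') = Suc (card S')" using eS' fS' by simp
      thus "card L \<le> card (insert e S') * (k * D)"
        using cL S'(3) cK by simp
    qed
  qed
qed

lemma minimal_edge:
  assumes finE: "finite E" and fin: "\<forall>e\<in>E. finite e" and nz: "\<forall>e\<in>E. w e \<noteq> 0"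
    and e: "e \<in> E" "\<not> e \<subseteq> c"
  shows "\<exists>A B. A \<subseteq> c \<and> B \<subseteq> e - c \<and> B \<noteq> {} \<and> weight E w (A \<union> B) - weight E w A \<noteq> 0"
proof -
  define M where "M = {e'\<in>E. e' \<subseteq> e \<and> \<not> e' \<subseteq> c}"
  have "e \<in> M" using e unfolding M_def by auto
  then obtain e0 where e0: "e0 \<in> M" "\<forall>y. y \<in> M \<longrightarrow> card e0 \<le> card y"
    using ex_has_least_nat[of "\<lambda>x. x \<in> M" e card] by blast
  have "weight E w e0 - weight E w (e0 \<inter> c) = (\<Sum>e'\<in>E. if e' \<subseteq> e0 \<and> \<not> e' \<subseteq> c then w e' else 0)"
    unfolding weight_alt[OF finE] by (simp add: sum_subtractf[symmetric]) (rule sum.cong, auto)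
  also have "\<dots> = (\<Sum>e'\<in>E. if e' = e0 then w e' else 0)"
  proof (rule sum.cong[OF refl])
    fix e' assume e': "e' \<in> E"
    have "e' \<subseteq> e0 \<and> \<not> e' \<subseteq> c \<longleftrightarrow> e' = e0"
    proof
      assume H: "e' \<subseteq> e0 \<and> \<not> e' \<subseteq> c"
      hence "e' \<in> M" using e' e0 unfolding M_def by auto
      hence "card e0 \<le> card e'" using e0 by auto
      moreover have "finite e0" using e0 fin unfolding M_def by auto
      ultimately show "e' = e0" using H card_subset_eq card_mono by (metis le_antisym)
    qed (use e0 M_def in auto)
    thus "(if e' \<subseteq> e0 \<and> \<not> e' \<subseteq> c then w e' else 0) = (if e' = e0 then w e' else 0)" by simp
  qed
  also have "\<dots> = w e0" using e0 finE unfolding M_def by (simp add: sum.delta)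
  finally have "weight E w e0 - weight E w (e0 \<inter> c) \<noteq> 0" using nz e0 unfolding M_def by auto
  moreover have "e0 = (e0 \<inter> c) \<union> (e0 - c)" by auto
  ultimately show ?thesis using e0 unfolding M_def
    by (intro exI[of _ "e0 \<inter> c"] exI[of _ "e0 - c"]) auto
qed

lemma pigeon:
  assumes "finite S" "S \<noteq> {}" "h ` S \<subseteq> Y" "finite Y"
  shows "\<exists>y\<in>Y. card S \<le> card {x\<in>S. h x = y} * card Y"
proof (rule ccontr)
  assume "\<not> ?thesis"
  hence lt: "\<forall>y\<in>Y. card {x\<in>S. h x = y} * card Y < card S" by auto
  have SU: "S = (\<Union>y\<in>Y. {x\<in>S. h x = y})" using assms by auto
  have "card S = (\<Sum>y\<in>Y. card {x\<in>S. h x = y})"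
    by (subst SU, rule card_UN_disjoint) (use assms in auto)
  hence "card S * card Y = (\<Sum>y\<in>Y. card {x\<in>S. h x = y} * card Y)" by (simp add: sum_distrib_right)
  also have "\<dots> < (\<Sum>y\<in>Y. card S)"
    using lt assms by (intro sum_strict_mono) auto
  also have "\<dots> = card S * card Y" by simp
  finally show False by simp
qed




theorem lemma10:
  fixes d \<alpha> :: nat and V :: "'a set" and E :: "'a set set"
    and w :: "'a set \<Rightarrow> int" and c :: "'a set"
  assumes "d \<ge> 1"
    and "hypergraph d V E"
    and "no_isolated V E"
    and "\<forall>e\<in>E. w e \<noteq> 0"
    and "\<exists>e\<in>E. c \<subseteq> e"
    and "card (link E c) \<ge> gfun d \<alpha> (d - card c)"
    and "\<forall>f. c \<subset> f \<and> f \<subseteq> V \<and> card f \<le> d \<longrightarrow> card (link E f) < gfun d \<alpha> (d - card f)"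
  shows "\<exists>X\<subseteq>V. \<bar>weight E w X\<bar> \<ge> int \<alpha>"
proof (rule ccontr)
  assume neg: "\<not> ?thesis"
  note d1 = assms(1) and nz = assms(4) and big = assms(6) and small = assms(7)
  have finV: "finite V" and EV: "\<forall>e\<in>E. e \<subseteq> V \<and> card e \<le> d"
    using assms(2) unfolding hypergraph_def by auto
  have "E \<subseteq> Pow V" using EV by auto
  hence finE: "finite E" using finV by (simp add: finite_subset)
  have fine: "\<forall>e\<in>E. finite e" using EV finV finite_subset by blast
  have a1: "\<alpha> \<ge> 1"
  proof (rule ccontr)
    assume "\<not> \<alpha> \<ge> 1" hence "\<alpha> = 0" by simp
    thus False using neg by auto
  qed
  define \<beta> :: int where "\<beta> = int \<alpha> - 1"
  have bnd: "\<forall>X\<subseteq>V. \<bar>weight E w X\<bar> \<le> \<beta>"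
  proof (intro allI impI)
    fix X assume "X \<subseteq> V"
    hence "\<not> \<bar>weight E w X\<bar> \<ge> int \<alpha>" using neg by blast
    thus "\<bar>weight E w X\<bar> \<le> \<beta>" unfolding \<beta>_def by linarith
  qed
  obtain e0 where e0: "e0 \<in> E" "c \<subseteq> e0" using assms(5) by auto
  have cV: "c \<subseteq> V" using e0 EV by auto
  have finc: "finite c" using cV finV finite_subset by blast
  define k where "k = d - card c"
  define L where "L = link E c"
  have finL: "finite L" unfolding L_def link_def using finE by simp
  have gk: "gfun d \<alpha> k \<le> card L" using big unfolding k_def L_def .
  have cd: "card c < d"
  proof (rule ccontr)
    assume "\<not> card c < d"
    note H = this
    have "L = {}"
    proof -
      have "False" if "e \<in> L" for e
      proof -
        have "c \<subset> e" "e \<in> E" using that unfolding L_def link_def by auto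
        hence lt: "card c < card e" using fine by (meson psubset_card_mono)
        have "card e \<le> d" using EV \<open>e \<in> E\<close> by blast
        thus False using lt H by linarith
      qed
      thus ?thesis by blast
    qed
    thus False using gk gfun_pos[OF a1, of d k] by simp
  qed
  have k1: "k \<ge> 1" using cd unfolding k_def by simp
  define D where "D = gfun d \<alpha> (k - 1)"
  define p where "p e = e - c" for e
  have pL: "\<forall>e\<in>L. finite (p e) \<and> card (p e) \<le> k \<and> p e \<noteq> {}"
  proof
    fix e assume "e \<in> L"
    hence e: "e \<in> E" "c \<subset> e" unfolding L_def link_def by auto
    have "card (p e) = card e - card c" unfolding p_def using e fine finc by (simp add: card_Diff_subset)
    moreover have "card e \<le> d" using EV e by auto
    ultimately show "finite (p e) \<and> card (p e) \<le> k \<and> p e \<noteq> {}"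
      unfolding p_def k_def using e fine by auto
  qed
  have degL: "\<forall>v. card {e\<in>L. v \<in> p e} \<le> D"
  proof
    fix v
    show "card {e\<in>L. v \<in> p e} \<le> D"
    proof (cases "v \<in> V \<and> v \<notin> c")
      case False
      hence ce: "{e\<in>L. v \<in> p e} = {}" unfolding L_def link_def p_def using EV by auto
      show ?thesis by (subst ce) simp
    next
      case True
      define f where "f = insert v c"
      have cf: "card f = card c + 1" unfolding f_def using True finc by simp
      have "c \<subset> f \<and> f \<subseteq> V \<and> card f \<le> d" using True cV cf cd unfolding f_def by auto
      hence lf: "card (link E f) < gfun d \<alpha> (d - card f)" using small by blast
      have "d - card f = k - 1" unfolding k_def using cf by simp
      hence lf': "card (link E f) < D" using lf unfolding D_def by simp
      have sub: "{e\<in>L. v \<in> p e} \<subseteq> insert f (link E f)"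
        unfolding L_def link_def p_def f_def by auto
      have flf: "finite (link E f)" unfolding link_def using finE by simp
      hence "card {e\<in>L. v \<in> p e} \<le> card (insert f (link E f))"
        using sub by (intro card_mono) auto
      also have "\<dots> \<le> card (link E f) + 1" using flf by (simp add: card_insert_if)
      finally show ?thesis using lf' by simp
    qed
  qed
  obtain S where S: "S \<subseteq> L" "\<forall>e1\<in>S. \<forall>e2\<in>S. e1 \<noteq> e2 \<longrightarrow> p e1 \<inter> p e2 = {}"
    "card L \<le> card S * (k * D)"
    using greedy[OF finL pL degL] by blast
  define Bc where "Bc = 2 * \<alpha> * 2 ^ (2 ^ d)"
  have "k * D * Bc \<le> card S * (k * D)"
    using gfun_step[OF a1 k1, of d] gk S(3) unfolding D_def Bc_def by linarith
  moreover have "k * D > 0" using k1 gfun_pos[OF a1] unfolding D_def by (simp add: Suc_le_eq)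
  ultimately have BS: "Bc \<le> card S" by (simp add: mult.commute)
  have finS: "finite S" using S(1) finL finite_subset by blast
  have Sne: "S \<noteq> {}" using BS a1 unfolding Bc_def by auto
  have "\<forall>e\<in>S. \<exists>AB. fst AB \<subseteq> c \<and> snd AB \<subseteq> e - c \<and> snd AB \<noteq> {} \<and>
      weight E w (fst AB \<union> snd AB) - weight E w (fst AB) \<noteq> 0"
  proof
    fix e assume "e \<in> S"
    hence "e \<in> E" "\<not> e \<subseteq> c" using S(1) unfolding L_def link_def by auto
    from minimal_edge[OF finE fine nz this] show "\<exists>AB. fst AB \<subseteq> c \<and> snd AB \<subseteq> e - c \<and> snd AB \<noteq> {} \<and>
      weight E w (fst AB \<union> snd AB) - weight E w (fst AB) \<noteq> 0" by auto
  qed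
  hence "\<exists>AB. \<forall>e\<in>S. fst (AB e) \<subseteq> c \<and> snd (AB e) \<subseteq> e - c \<and> snd (AB e) \<noteq> {} \<and>
      weight E w (fst (AB e) \<union> snd (AB e)) - weight E w (fst (AB e)) \<noteq> 0" by (rule bchoice)
  then obtain AB where AB: "\<forall>e\<in>S. fst (AB e) \<subseteq> c \<and> snd (AB e) \<subseteq> e - c \<and> snd (AB e) \<noteq> {} \<and>
      weight E w (fst (AB e) \<union> snd (AB e)) - weight E w (fst (AB e)) \<noteq> 0"
    by blast
  define Af where "Af e = fst (AB e)" for e
  define Bf where "Bf e = snd (AB e)" for e
  define a where "a e = weight E w (Af e \<union> Bf e) - weight E w (Af e)" for e
  define h where "h e = (Af e, a e > 0)" for e
  define Y where "Y = Pow c \<times> (UNIV :: bool set)"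
  have finY: "finite Y" unfolding Y_def using finc by simp
  have cardY: "card Y = 2 ^ card c * 2" unfolding Y_def using finc by (simp add: card_cartesian_product card_Pow)
  have hY: "h ` S \<subseteq> Y" unfolding h_def Y_def Af_def using AB by auto
  obtain y where y: "y \<in> Y" "card S \<le> card {x\<in>S. h x = y} * card Y"
    using pigeon[OF finS Sne hY finY] by blast
  obtain A0 s0 where y0: "y = (A0, s0)" by (cases y)
  define I where "I = {x\<in>S. h x = y}"
  have IS: "I \<subseteq> S" unfolding I_def by auto
  have finI: "finite I" using IS finS finite_subset by blast
  have AfI: "Af e = A0" if "e \<in> I" for e using that unfolding I_def h_def y0 by auto
  have A0c: "A0 \<subseteq> c" using y y0 unfolding Y_def by auto
  have AB0: "\<forall>i\<in>I. A0 \<inter> Bf i = {}" using AB IS A0c unfolding Bf_def by blast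
  have disjB: "\<forall>i\<in>I. \<forall>j\<in>I. i \<noteq> j \<longrightarrow> Bf i \<inter> Bf j = {}"
  proof (intro ballI impI)
    fix i j assume "i \<in> I" "j \<in> I" "i \<noteq> j"
    hence "p i \<inter> p j = {}" using S(2) IS by auto
    moreover have "Bf i \<subseteq> p i" "Bf j \<subseteq> p j" using AB IS \<open>i \<in> I\<close> \<open>j \<in> I\<close> unfolding Bf_def p_def by auto
    ultimately show "Bf i \<inter> Bf j = {}" by auto
  qed
  have bndI: "\<forall>J\<subseteq>I. \<bar>weight E w (A0 \<union> \<Union>(Bf ` J))\<bar> \<le> \<beta>"
  proof (intro allI impI)
    fix J assume "J \<subseteq> I"
    have "Bf e \<subseteq> V" if "e \<in> I" for e
    proof -
      have "e \<in> E" using that IS S(1) unfolding L_def link_def by auto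
      thus ?thesis using AB that IS EV unfolding Bf_def by blast
    qed
    hence "A0 \<union> \<Union>(Bf ` J) \<subseteq> V" using A0c cV \<open>J \<subseteq> I\<close> by blast
    thus "\<bar>weight E w (A0 \<union> \<Union>(Bf ` J))\<bar> \<le> \<beta>" using bnd by blast
  qed
  have edges: "\<forall>e\<in>E. finite e \<and> card e \<le> d" using fine EV by auto
  have avgI: "real_of_int \<bar>\<Sum>i\<in>I. (weight E w (A0 \<union> Bf i) - weight E w A0)\<bar> \<le> real d * (\<Sum>j\<le>d. \<bar>lam d j\<bar>) * real_of_int \<beta>"
    by (rule avg[OF finE finI edges d1 AB0 disjB bndI])
  have aI: "(\<Sum>i\<in>I. (weight E w (A0 \<union> Bf i) - weight E w A0)) = (\<Sum>i\<in>I. a i)"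
    unfolding a_def using AfI by simp
  have anz: "a i \<noteq> 0" if "i \<in> S" for i using AB that unfolding a_def Af_def Bf_def by auto
  have sgn: "(a i > 0) = s0" if "i \<in> I" for i using that unfolding I_def h_def y0 by auto
  have "int (card I) \<le> \<bar>\<Sum>i\<in>I. a i\<bar>"
  proof (cases s0)
    case True
    have "\<forall>i\<in>I. a i \<ge> 1"
    proof
      fix i assume "i \<in> I"
      hence "a i > 0" using sgn True by simp
      thus "a i \<ge> 1" by linarith
    qed
    hence "(\<Sum>i\<in>I. (1::int)) \<le> (\<Sum>i\<in>I. a i)" by (intro sum_mono) auto
    thus ?thesis by simp
  next
    case False
    hence "\<forall>i\<in>I. a i \<le> -1" using sgn anz IS by force
    hence "(\<Sum>i\<in>I. a i) \<le> (\<Sum>i\<in>I. (-1::int))" by (intro sum_mono) auto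
    thus ?thesis by simp
  qed
  hence ci: "int (card I) \<le> \<bar>\<Sum>i\<in>I. (weight E w (A0 \<union> Bf i) - weight E w A0)\<bar>" using aI by simp
  have "real (card I) = real_of_int (int (card I))" by simp
  also have "\<dots> \<le> real_of_int \<bar>\<Sum>i\<in>I. (weight E w (A0 \<union> Bf i) - weight E w A0)\<bar>"
    using ci by (simp only: of_int_le_iff)
  also have "\<dots> \<le> real d * (\<Sum>j\<le>d. \<bar>lam d j\<bar>) * real_of_int \<beta>" by (rule avgI)
  finally have cI: "real (card I) \<le> real d * (\<Sum>j\<le>d. \<bar>lam d j\<bar>) * real_of_int \<beta>" .
  have "card Y \<le> 2 ^ d"
  proof -
    have "(2::nat) ^ card c * 2 = 2 ^ (card c + 1)" by simp
    also have "\<dots> \<le> 2 ^ d" using cd by (intro power_increasing) auto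
    finally show ?thesis using cardY by simp
  qed
  hence "card I * card Y \<le> card I * 2 ^ d" by (rule mult_le_mono2)
  hence "Bc \<le> card I * 2 ^ d" using y(2) BS unfolding I_def by linarith
  hence "real Bc \<le> real (card I * 2 ^ d)" by (simp only: of_nat_le_iff)
  hence "real Bc \<le> real (card I) * 2 ^ d" by simp
  also have "\<dots> \<le> real d * (\<Sum>j\<le>d. \<bar>lam d j\<bar>) * real_of_int \<beta> * 2 ^ d"
    using cI by (intro mult_right_mono) auto
  also have "\<dots> = (real d * (\<Sum>j\<le>d. \<bar>lam d j\<bar>) * 2 ^ d) * real_of_int \<beta>" by (simp add: mult_ac)
  also have "\<dots> \<le> (2 * 2 ^ (2 ^ d)) * real_of_int \<beta>"
    using Kbound[OF d1] a1 unfolding \<beta>_def by (intro mult_right_mono) auto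
  finally have "real Bc \<le> 2 * 2 ^ (2 ^ d) * (real \<alpha> - 1)" unfolding \<beta>_def by simp
  moreover have "real Bc = 2 * 2 ^ (2 ^ d) * real \<alpha>" unfolding Bc_def by simp
  moreover have "(0::real) < 2 ^ (2 ^ d)" by simp
  ultimately show False by (simp add: algebra_simps)
qed


end
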